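(* Let $M\ge2$ and $a\in(0,\frac1M)$. Let $F_a$ be either $f_a$ on $[0,1]^d$ with $d=2$, or $g_a=f_{a,\frac1M-a}$ on $[0,1]^d$ with $d=3$. Then for Lebesgue-almost every pair $(x,y)\in[0,1]^d\times[0,1]^d$, $$\liminf_{n\to\infty}{\rm dist}(F_a^n(x),F_a^n(y))=0\quad\text{and}\quad\limsup_{n\to\infty}{\rm dist}(F_a^n(x),F_a^n(y))=\sqrt d,$$ where ${\rm dist}$ is the Euclidean distance. In other words, Lebesgue-almost every pair is a Li–Yorke pair of $F_a$.
   Context: Fix an integer $M\ge2$. $\tau_a$ is given by - $\tau_a(x)=\frac{x-(k-1)a}{a}$ on $[(k-1)a,ka)$, $k=1,\dots,M$; - $\tau_a(x)=\frac{x-Ma}{1-Ma}$ on $[Ma,1]$. Put - $\Omega^+_{\alpha_k}=[(k-1)a,ka)\times[0,1]$; - $\Omega^+_{\beta_k}=[Ma,1]\times[\frac{k-1}M,\frac kM)$ for $k\le M-1$; - $\Omega^+_{\beta_M}=[Ma,1]\times[\frac{M-1}M,1]$. $f_a$ is given by - $f_a(x_u,x_c)=(\tau_a(x_u),\frac{x_c}M+\frac{k-1}M)$ on $\Omega^+_{\alpha_k}$; - $f_a(x_u,x_c)=(\tau_a(x_u),Mx_c-k+1)$ on $\Omega^+_{\beta_k}$. For $(a,b)\in(0,\frac1M)^2$, with $\Omega_\gamma=\Omega^+_\gamma\times[0,1]$, $f_{a,b}$ is given by - $f_{a,b}(x_u,x_c,x_s)=(f_a(x_u,x_c),(1-Mb)x_s)$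 on $\Omega_{\alpha_k}$; - $f_{a,b}(x_u,x_c,x_s)=(f_a(x_u,x_c),bx_s+1+b(k-M-1))$ on $\Omega_{\beta_k}$. *)

theory Defs
  imports "HOL-Analysis.Analysis"
begin

definition alpha_idx :: "real \<Rightarrow> real \<Rightarrow> nat" where
  "alpha_idx a x = nat \<lfloor>x / a\<rfloor> + 1"

text \<open>Index k with x_c in [(k-1)/M, k/M) for k <= M-1, and k = M on [(M-1)/M, 1].\<close>
definition beta_idx :: "nat \<Rightarrow> real \<Rightarrow> nat" where
  "beta_idx M c = min M (nat \<lfloor>real M * c\<rfloor> + 1)"

definition tau :: "nat \<Rightarrow> real \<Rightarrow> real \<Rightarrow> real" where
  "tau M a x = (if x < real M * a
      then (x - (real (alpha_idx a x) - 1) * a) / a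
      else (x - real M * a) / (1 - real M * a))"

definition f2 :: "nat \<Rightarrow> real \<Rightarrow> real \<times> real \<Rightarrow> real \<times> real" where
  "f2 M a p = (case p of (u, c) \<Rightarrow>
     (tau M a u,
      if u < real M * a
      then c / real M + (real (alpha_idx a u) - 1) / real M
      else real M * c - real (beta_idx M c) + 1))"

definition f3 :: "nat \<Rightarrow> real \<Rightarrow> real \<Rightarrow> real \<times> real \<times> real \<Rightarrow> real \<times> real \<times> real" where
  "f3 M a b p = (case p of (u, c, s) \<Rightarrow>
     (fst (f2 M a (u, c)), snd (f2 M a (u, c)),
      if u < real M * a
      then (1 - real M * b) * s
      else b * s + 1 + b * (real (beta_idx M c) - real M - 1)))"

end

theory Submission
  imports Defs
begin

locale LY =
  fixes M :: nat and a :: real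
  assumes M2: "M \<ge> 2" and apos: "0 < a" and asmall: "a < 1 / real M"
begin

lemma Ma_lt1: "real M * a < 1" using asmall M2 by (simp add: field_simps)
lemma Mpos: "real M > 0" using M2 by simp

lemma tau_meas[measurable]: "tau M a \<in> borel_measurable borel"
  unfolding tau_def alpha_idx_def by measurable

definition dig :: "real \<Rightarrow> nat" where
  "dig u = (if u < real M * a then alpha_idx a u else M + 1)"

lemma dig_meas[measurable]: "dig \<in> measurable borel (count_space UNIV)"
  unfolding dig_def alpha_idx_def by measurable

definition pr :: "nat \<Rightarrow> real" where "pr k = (if k \<le> M then a else 1 - real M * a)"
definition ell :: "nat \<Rightarrow> real" where "ell k = (if k \<le> M then (real k - 1) * a else real M * a)"
definition h :: "nat \<Rightarrow> real \<Rightarrow> real" where "h k t = ell k + pr k * t"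
definition piece :: "nat \<Rightarrow> real set" where "piece k = {ell k ..< ell k + pr k}"

lemma pr_pos: "pr k > 0" using apos Ma_lt1 by (simp add: pr_def)

lemma alpha_idx_range:
  assumes "0 \<le> u" "u < real M * a"
  shows "1 \<le> alpha_idx a u" "alpha_idx a u \<le> M"
proof -
  show "1 \<le> alpha_idx a u" by (simp add: alpha_idx_def)
  have "u / a < real M" using assms apos by (simp add: field_simps)
  then have "\<lfloor>u/a\<rfloor> < int M" by (simp add: floor_less_iff)
  moreover have "0 \<le> \<lfloor>u/a\<rfloor>" using assms apos by simp
  ultimately have "nat \<lfloor>u/a\<rfloor> < M" by (simp add: nat_less_iff)
  then show "alpha_idx a u \<le> M" by (simp add: alpha_idx_def)
qed

lemma piece_iff:
  assumes k: "k \<in> {1..M+1}"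
  shows "u \<in> piece k \<longleftrightarrow> u \<in> {0..<1} \<and> dig u = k"
proof (cases "k \<le> M")
  case True
  have e: "ell k + pr k = real k * a" "ell k = (real k - 1) * a" using True by (auto simp: ell_def pr_def algebra_simps)
  have kM: "real k * a \<le> real M * a" using True apos by simp
  show ?thesis
  proof
    assume u: "u \<in> piece k"
    then have u1: "(real k - 1) * a \<le> u" "u < real k * a" using e by (auto simp: piece_def)
    have "real k - 1 \<le> u / a" "u / a < real k" using u1 apos by (auto simp: field_simps)
    then have "\<lfloor>u/a\<rfloor> = int k - 1" by (intro floor_unique) auto
    moreover have "u < real M * a" using u1 kM by simp
    moreover have "0 \<le> u" proof -
      have "real k - 1 \<ge> 0" using k by auto
      then show ?thesis using u1 apos by (meson mult_nonneg_nonneg order.trans less_imp_le)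
    qed
    ultimately show "u \<in> {0..<1} \<and> dig u = k" using k Ma_lt1 by (auto simp: dig_def alpha_idx_def)
  next
    assume u: "u \<in> {0..<1} \<and> dig u = k"
    then have um: "u < real M * a" using True by (auto simp: dig_def split: if_splits)
    then have "nat \<lfloor>u/a\<rfloor> + 1 = k" using u by (simp add: dig_def alpha_idx_def)
    moreover have "0 \<le> \<lfloor>u/a\<rfloor>" using u apos by simp
    ultimately have fl: "\<lfloor>u/a\<rfloor> = int k - 1" by linarith
    have "real k - 1 \<le> u / a" "u / a < real k" using fl by linarith+
    then have "(real k - 1) * a \<le> u" "u < real k * a" using apos by (auto simp: field_simps)
    then show "u \<in> piece k" using e by (auto simp: piece_def)
  qed
next
  case False
  then have kk: "k = M + 1" using k by auto
  have e: "ell k = real M * a" "ell k + pr k = 1" using kk by (auto simp: ell_def pr_def)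
  show ?thesis
  proof
    assume "u \<in> piece k"
    moreover have "0 \<le> real M * a" using apos by simp
    ultimately show "u \<in> {0..<1} \<and> dig u = k" using e kk
      by (auto simp: piece_def dig_def)
  next
    assume u: "u \<in> {0..<1} \<and> dig u = k"
    have "\<not> u < real M * a"
    proof
      assume "u < real M * a"
      then have "dig u \<le> M" using alpha_idx_range[of u] u by (simp add: dig_def)
      then show False using u kk by simp
    qed
    then show "u \<in> piece k" using u e by (auto simp: piece_def)
  qed
qed

lemma h_piece: "k \<in> {1..M+1} \<Longrightarrow> t \<in> {0..<1} \<Longrightarrow> h k t \<in> piece k"
  using pr_pos[of k] by (auto simp: h_def piece_def)

lemma dig_h: "k \<in> {1..M+1} \<Longrightarrow> t \<in> {0..<1} \<Longrightarrow> dig (h k t) = k"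
  using h_piece piece_iff by blast

lemma tau_h: assumes "k \<in> {1..M+1}" "t \<in> {0..<1}" shows "tau M a (h k t) = t"
proof -
  have d: "dig (h k t) = k" and p: "h k t \<in> {0..<1}" using dig_h h_piece piece_iff assms by blast+
  show ?thesis
  proof (cases "k \<le> M")
    case True
    then have lt: "h k t < real M * a" using d by (auto simp: dig_def split: if_splits)
    then have "alpha_idx a (h k t) = k" using d by (simp add: dig_def)
    then have "tau M a (h k t) = (h k t - (real k - 1) * a) / a" using lt by (simp add: tau_def)
    also have "\<dots> = (a * t) / a" using True by (simp add: h_def ell_def pr_def)
    also have "\<dots> = t" using apos by simp
    finally show ?thesis .
  next
    case False
    then have "\<not> h k t < real M * a" using d alpha_idx_range[of "h k t"] p by (auto simp: dig_def split: if_splits)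
    then have "tau M a (h k t) = (h k t - real M * a) / (1 - real M * a)" by (simp add: tau_def)
    also have "\<dots> = ((1 - real M * a) * t) / (1 - real M * a)" using False by (simp add: h_def ell_def pr_def)
    also have "\<dots> = t" using Ma_lt1 by simp
    finally show ?thesis .
  qed
qed

lemma indU_sum: "indicator {0..<1} u = (\<Sum>k\<in>{1..M+1}. indicator (piece k) u :: ennreal)"
proof (cases "u \<in> {0..<1}")
  case True
  then have dk: "dig u \<in> {1..M+1}"
    using alpha_idx_range[of u] by (auto simp: dig_def)
  have "(\<Sum>k\<in>{1..M+1}. indicator (piece k) u :: ennreal) = (\<Sum>k\<in>{1..M+1}. if k = dig u then 1 else 0)"
    by (rule sum.cong[OF refl]) (use piece_iff True in auto)
  also have "\<dots> = 1" using dk by (subst sum.delta) auto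
  finally show ?thesis using True by simp
next
  case False
  then have "\<forall>k\<in>{1..M+1}. indicator (piece k) u = (0::ennreal)" using piece_iff by auto
  then show ?thesis using False by simp
qed

lemma transfer:
  assumes g[measurable]: "g \<in> borel_measurable borel"
  shows "(\<integral>\<^sup>+u. indicator {0..<1} u * g u \<partial>lborel)
       = (\<Sum>k\<in>{1..M+1}. ennreal (pr k) * (\<integral>\<^sup>+t. indicator {0..<1} t * g (h k t) \<partial>lborel))"
proof -
  have "(\<integral>\<^sup>+u. indicator {0..<1} u * g u \<partial>lborel) = (\<integral>\<^sup>+u. (\<Sum>k\<in>{1..M+1}. indicator (piece k) u * g u) \<partial>lborel)"
    by (intro nn_integral_cong) (simp only: indU_sum sum_distrib_right)
  also have "\<dots> = (\<Sum>k\<in>{1..M+1}. \<integral>\<^sup>+u. indicator (piece k) u * g u \<partial>lborel)"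
    by (rule nn_integral_sum) (simp add: piece_def)
  also have "\<dots> = (\<Sum>k\<in>{1..M+1}. ennreal (pr k) * (\<integral>\<^sup>+t. indicator {0..<1} t * g (h k t) \<partial>lborel))"
  proof (rule sum.cong[OF refl])
    fix k assume k: "k \<in> {1..M+1}"
    have "(\<integral>\<^sup>+u. indicator (piece k) u * g u \<partial>lborel)
        = ennreal \<bar>pr k\<bar> * (\<integral>\<^sup>+t. indicator (piece k) (ell k + pr k * t) * g (ell k + pr k * t) \<partial>lborel)"
      using pr_pos[of k] by (intro nn_integral_real_affine) (auto simp: piece_def)
    also have "(\<lambda>t. indicator (piece k) (ell k + pr k * t)) = (indicator {0..<1} :: real \<Rightarrow> ennreal)"
      using pr_pos[of k] by (auto simp: piece_def indicator_def fun_eq_iff zero_le_mult_iff)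
    finally show "(\<integral>\<^sup>+u. indicator (piece k) u * g u \<partial>lborel) = ennreal (pr k) * (\<integral>\<^sup>+t. indicator {0..<1} t * g (h k t) \<partial>lborel)"
      using pr_pos[of k] by (simp add: h_def)
  qed
  finally show ?thesis .
qed

end

context LY begin

lemma sum_pr: "(\<Sum>k\<in>{1..M+1}. ennreal (pr k)) = 1"
proof -
  have "(\<Sum>k\<in>{1..M+1}. ennreal (pr k)) = ennreal (\<Sum>k\<in>{1..M+1}. pr k)"
    using pr_pos by (intro sum_ennreal) (auto intro: less_imp_le)
  also have "(\<Sum>k\<in>{1..M+1}. pr k) = (\<Sum>k\<in>{1..M}. pr k) + pr (M+1)"
    by simp
  also have "(\<Sum>k\<in>{1..M}. pr k) = real M * a" by (simp add: pr_def)
  also have "pr (M+1) = 1 - real M * a" by (simp add: pr_def)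
  finally show ?thesis by simp
qed

lemma tau_funpow_meas[measurable]: "(tau M a ^^ n) \<in> borel_measurable borel"
  by (induction n) auto



lemma invariant1:
  assumes g[measurable]: "g \<in> borel_measurable borel"
  shows "(\<integral>\<^sup>+u. indicator {0..<1} u * g (tau M a u) \<partial>lborel) = (\<integral>\<^sup>+u. indicator {0..<1} u * g u \<partial>lborel)"
proof -
  have "(\<integral>\<^sup>+u. indicator {0..<1} u * g (tau M a u) \<partial>lborel)
      = (\<Sum>k\<in>{1..M+1}. ennreal (pr k) * (\<integral>\<^sup>+t. indicator {0..<1} t * g (tau M a (h k t)) \<partial>lborel))"
    by (rule transfer) measurable
  also have "\<dots> = (\<Sum>k\<in>{1..M+1}. ennreal (pr k) * (\<integral>\<^sup>+t. indicator {0..<1} t * g t \<partial>lborel))"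
  proof (rule sum.cong[OF refl])
    fix k assume "k \<in> {1..M+1}"
    then have "(\<integral>\<^sup>+t. indicator {0..<1} t * g (tau M a (h k t)) \<partial>lborel) = (\<integral>\<^sup>+t. indicator {0..<1} t * g t \<partial>lborel)"
      by (intro nn_integral_cong) (auto split: split_indicator simp: tau_h)
    then show "ennreal (pr k) * (\<integral>\<^sup>+t. indicator {0..<1} t * g (tau M a (h k t)) \<partial>lborel) = ennreal (pr k) * (\<integral>\<^sup>+t. indicator {0..<1} t * g t \<partial>lborel)" by simp
  qed
  also have "\<dots> = (\<integral>\<^sup>+t. indicator {0..<1} t * g t \<partial>lborel)"
    by (simp only: sum_distrib_right[symmetric] sum_pr mult_1)
  finally show ?thesis .
qed

lemma invariantn:
  assumes g[measurable]: "g \<in> borel_measurable borel"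
  shows "(\<integral>\<^sup>+u. indicator {0..<1} u * g ((tau M a ^^ n) u) \<partial>lborel) = (\<integral>\<^sup>+u. indicator {0..<1} u * g u \<partial>lborel)"
proof (induction n)
  case (Suc n)
  have "(\<integral>\<^sup>+u. indicator {0..<1} u * g ((tau M a ^^ Suc n) u) \<partial>lborel)
     = (\<integral>\<^sup>+u. indicator {0..<1} u * (\<lambda>x. g ((tau M a ^^ n) x)) (tau M a u) \<partial>lborel)"
    by (simp add: funpow_swap1)
  also have "\<dots> = (\<integral>\<^sup>+u. indicator {0..<1} u * g ((tau M a ^^ n) u) \<partial>lborel)"
    by (rule invariant1) measurable
  finally show ?case using Suc by simp
qed simp

definition matches :: "nat list \<Rightarrow> real \<Rightarrow> bool" where
  "matches w u \<longleftrightarrow> (\<forall>i<length w. dig ((tau M a ^^ i) u) = w ! i)"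

lemma matches_meas[measurable]: "Measurable.pred borel (matches w)"
  unfolding matches_def by measurable

lemma matches_Cons: "matches (k # w) u \<longleftrightarrow> dig u = k \<and> matches w (tau M a u)"
  unfolding matches_def
  by (simp add: All_less_Suc2 funpow_swap1)

lemma cylinder:
  assumes g[measurable]: "g \<in> borel_measurable borel" and w: "set w \<subseteq> {1..M+1}"
  shows "(\<integral>\<^sup>+u. indicator {0..<1} u * (if matches w u then g ((tau M a ^^ length w) u) else 0) \<partial>lborel)
       = ennreal (prod_list (map pr w)) * (\<integral>\<^sup>+u. indicator {0..<1} u * g u \<partial>lborel)"
  using w
proof (induction w)
  case Nil
  then show ?case by (simp add: matches_def)
next
  case (Cons k w)
  have k: "k \<in> {1..M+1}" using Cons by auto
  have "(\<integral>\<^sup>+u. indicator {0..<1} u * (if matches (k#w) u then g ((tau M a ^^ length (k#w)) u) else 0) \<partial>lborel)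
     = (\<Sum>j\<in>{1..M+1}. ennreal (pr j) * (\<integral>\<^sup>+t. indicator {0..<1} t *
           (if matches (k#w) (h j t) then g ((tau M a ^^ length (k#w)) (h j t)) else 0) \<partial>lborel))"
    by (rule transfer) measurable
  also have "\<dots> = (\<Sum>j\<in>{1..M+1}. if j = k then ennreal (pr k) * (\<integral>\<^sup>+t. indicator {0..<1} t *
           (if matches w t then g ((tau M a ^^ length w) t) else 0) \<partial>lborel) else 0)"
  proof (rule sum.cong[OF refl])
    fix j assume j: "j \<in> {1..M+1}"
    have "\<And>t. indicator {0..<1} t * (if matches (k#w) (h j t) then g ((tau M a ^^ length (k#w)) (h j t)) else 0)
        = (if j = k then indicator {0..<1} t * (if matches w t then g ((tau M a ^^ length w) t) else 0) else 0)"
      using j by (auto split: split_indicator simp: matches_Cons dig_h tau_h funpow_swap1)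
    then show "ennreal (pr j) * (\<integral>\<^sup>+t. indicator {0..<1} t *
           (if matches (k#w) (h j t) then g ((tau M a ^^ length (k#w)) (h j t)) else 0) \<partial>lborel)
       = (if j = k then ennreal (pr k) * (\<integral>\<^sup>+t. indicator {0..<1} t *
           (if matches w t then g ((tau M a ^^ length w) t) else 0) \<partial>lborel) else 0)"
      by simp
  qed
  also have "\<dots> = ennreal (pr k) * (\<integral>\<^sup>+t. indicator {0..<1} t *
           (if matches w t then g ((tau M a ^^ length w) t) else 0) \<partial>lborel)"
    using k by (subst sum.delta) auto
  also have "\<dots> = ennreal (pr k) * (ennreal (prod_list (map pr w)) * (\<integral>\<^sup>+u. indicator {0..<1} u * g u \<partial>lborel))"
    using Cons by auto
  also have "\<dots> = ennreal (prod_list (map pr (k#w))) * (\<integral>\<^sup>+u. indicator {0..<1} u * g u \<partial>lborel)"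
    using pr_pos[of k] by (simp add: ennreal_mult' mult.assoc)
  finally show ?case .
qed

end

context LY begin

abbreviation "Q2 \<equiv> (lborel \<Otimes>\<^sub>M lborel :: (real \<times> real) measure)"

lemma fub: "F \<in> borel_measurable (borel \<Otimes>\<^sub>M borel) \<Longrightarrow>
   (\<integral>\<^sup>+z. F z \<partial>Q2) = (\<integral>\<^sup>+x. \<integral>\<^sup>+y. F (x, y) \<partial>lborel \<partial>lborel)"
  by (rule lborel.nn_integral_fst[symmetric]) simp

lemma prl_pos: "0 < prod_list (map pr w)"
  by (induction w) (auto simp: pr_pos)

definition W :: "real \<times> real \<Rightarrow> ennreal" where
  "W z = indicator {0..<1} (fst z) * indicator {0..<1} (snd z)"

lemma W_meas[measurable]: "W \<in> borel_measurable (borel \<Otimes>\<^sub>M borel)"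
  unfolding W_def by measurable

lemma inv2:
  assumes psi[measurable]: "psi \<in> borel_measurable (borel \<Otimes>\<^sub>M borel :: (real \<times> real) measure)"
  shows "(\<integral>\<^sup>+z. W z * psi ((tau M a ^^ n) (fst z), (tau M a ^^ n) (snd z)) \<partial>Q2) = (\<integral>\<^sup>+z. W z * psi z \<partial>Q2)"
proof -
  have "(\<integral>\<^sup>+z. W z * psi ((tau M a ^^ n) (fst z), (tau M a ^^ n) (snd z)) \<partial>Q2)
      = (\<integral>\<^sup>+x. \<integral>\<^sup>+y. indicator {0..<1} x * (indicator {0..<1} y * psi ((tau M a ^^ n) x, (tau M a ^^ n) y)) \<partial>lborel \<partial>lborel)"
    by (subst fub) (auto simp: W_def mult.assoc)
  also have "\<dots> = (\<integral>\<^sup>+x. indicator {0..<1} x * (\<lambda>x'. \<integral>\<^sup>+y. indicator {0..<1} y * psi (x', (tau M a ^^ n) y) \<partial>lborel) ((tau M a ^^ n) x) \<partial>lborel)"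
    by (intro nn_integral_cong nn_integral_cmult) measurable
  also have "\<dots> = (\<integral>\<^sup>+x. indicator {0..<1} x * (\<lambda>x'. \<integral>\<^sup>+y. indicator {0..<1} y * psi (x', (tau M a ^^ n) y) \<partial>lborel) x \<partial>lborel)"
    by (rule invariantn) measurable
  also have "\<dots> = (\<integral>\<^sup>+x. indicator {0..<1} x * (\<integral>\<^sup>+y. indicator {0..<1} y * psi (x, y) \<partial>lborel) \<partial>lborel)"
    by (intro nn_integral_cong arg_cong2[where f="(*)"] refl invariantn) measurable
  also have "\<dots> = (\<integral>\<^sup>+x. \<integral>\<^sup>+y. indicator {0..<1} x * (indicator {0..<1} y * psi (x, y)) \<partial>lborel \<partial>lborel)"
    by (intro nn_integral_cong nn_integral_cmult[symmetric]) measurable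
  also have "\<dots> = (\<integral>\<^sup>+z. W z * psi z \<partial>Q2)"
    by (subst fub) (auto simp: W_def mult.assoc)
  finally show ?thesis .
qed

definition P2 :: "nat list \<Rightarrow> nat list \<Rightarrow> real \<times> real \<Rightarrow> bool" where
  "P2 w1 w2 z \<longleftrightarrow> matches w1 (fst z) \<and> matches w2 (snd z)"

lemma P2_meas[measurable]: "Measurable.pred (borel \<Otimes>\<^sub>M borel) (P2 w1 w2)"
  unfolding P2_def by measurable

lemma cyl2:
  assumes psi[measurable]: "psi \<in> borel_measurable (borel \<Otimes>\<^sub>M borel :: (real \<times> real) measure)"
    and w: "set w1 \<subseteq> {1..M+1}" "set w2 \<subseteq> {1..M+1}" "length w1 = K" "length w2 = K"
  shows "(\<integral>\<^sup>+z. W z * (if P2 w1 w2 z then psi ((tau M a ^^ K) (fst z), (tau M a ^^ K) (snd z)) else 0) \<partial>Q2)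
     = ennreal (prod_list (map pr w1) * prod_list (map pr w2)) * (\<integral>\<^sup>+z. W z * psi z \<partial>Q2)"
proof -
  define q1 where "q1 = prod_list (map pr w1)"
  define q2 where "q2 = prod_list (map pr w2)"
  have q1: "q1 \<ge> 0" "q2 \<ge> 0" unfolding q1_def q2_def
    using prl_pos by (auto intro: less_imp_le)
  have "(\<integral>\<^sup>+z. W z * (if P2 w1 w2 z then psi ((tau M a ^^ K) (fst z), (tau M a ^^ K) (snd z)) else 0) \<partial>Q2)
      = (\<integral>\<^sup>+x. \<integral>\<^sup>+y. indicator {0..<1} x * (if matches w1 x then 1 else 0) *
           (indicator {0..<1} y * (if matches w2 y then psi ((tau M a ^^ K) x, (tau M a ^^ K) y) else 0)) \<partial>lborel \<partial>lborel)"
    by (subst fub) (auto intro!: nn_integral_cong simp: W_def P2_def mult_ac)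
  also have "\<dots> = (\<integral>\<^sup>+x. indicator {0..<1} x * (if matches w1 x then (\<lambda>x'. \<integral>\<^sup>+y. indicator {0..<1} y * (if matches w2 y then psi (x', (tau M a ^^ K) y) else 0) \<partial>lborel) ((tau M a ^^ K) x) else 0) \<partial>lborel)"
    by (intro nn_integral_cong) (auto simp: nn_integral_cmult)
  also have "\<dots> = (\<integral>\<^sup>+x. indicator {0..<1} x * (if matches w1 x then (\<lambda>x'. ennreal q2 * \<integral>\<^sup>+y. indicator {0..<1} y * psi (x', y) \<partial>lborel) ((tau M a ^^ K) x) else 0) \<partial>lborel)"
      proof -
    have eqn: "(\<integral>\<^sup>+y. indicator {0..<1} y * (if matches w2 y then psi (x', (tau M a ^^ K) y) else 0) \<partial>lborel)
       = ennreal q2 * (\<integral>\<^sup>+y. indicator {0..<1} y * psi (x', y) \<partial>lborel)" for x'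
      using cylinder[of "\<lambda>y. psi (x', y)" w2, unfolded w(4)] w unfolding q2_def by simp
    show ?thesis by (simp only: eqn)
  qed
  also have "\<dots> = ennreal q2 * (\<integral>\<^sup>+x. indicator {0..<1} x * (if matches w1 x then (\<lambda>x'. \<integral>\<^sup>+y. indicator {0..<1} y * psi (x', y) \<partial>lborel) ((tau M a ^^ K) x) else 0) \<partial>lborel)"
    by (subst nn_integral_cmult[symmetric]) (measurable, auto intro!: nn_integral_cong simp: mult.left_commute)
  also have "\<dots> = ennreal q2 * (ennreal q1 * (\<integral>\<^sup>+x. indicator {0..<1} x * (\<integral>\<^sup>+y. indicator {0..<1} y * psi (x, y) \<partial>lborel) \<partial>lborel))"
    using cylinder[of "\<lambda>x'. \<integral>\<^sup>+y. indicator {0..<1} y * psi (x', y) \<partial>lborel" w1, unfolded w(3)] w unfolding q1_def by simp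
  also have "(\<integral>\<^sup>+x. indicator {0..<1} x * (\<integral>\<^sup>+y. indicator {0..<1} y * psi (x, y) \<partial>lborel) \<partial>lborel) = (\<integral>\<^sup>+z. W z * psi z \<partial>Q2)"
    by (subst fub) (auto intro!: nn_integral_cong simp: W_def mult.assoc nn_integral_cmult)
  finally show ?thesis using q1 unfolding q1_def q2_def by (simp add: ennreal_mult mult_ac)
qed

end

context LY begin

lemma pr_le1: "pr k \<le> 1"
proof -
  have "1 / real M \<le> 1" using M2 by simp
  then have "a \<le> 1" using asmall by linarith
  moreover have "0 \<le> real M * a" using apos by simp
  ultimately show ?thesis by (simp add: pr_def)
qed

lemma prl_le1: "prod_list (map pr w) \<le> 1"
proof (induction w)
  case (Cons k w)
  have "pr k * prod_list (map pr w) \<le> 1"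
    by (rule mult_le_one[OF pr_le1 less_imp_le[OF prl_pos] Cons])
  then show ?case by simp
qed simp

lemma intW: "(\<integral>\<^sup>+z. W z * 1 \<partial>Q2) = 1"
proof -
  have e1: "(\<integral>\<^sup>+z. W z * 1 \<partial>Q2) = (\<integral>\<^sup>+x. \<integral>\<^sup>+y. indicator {0..<1::real} x * indicator {0..<1::real} y \<partial>lborel \<partial>lborel)"
    by (subst fub) (auto simp: W_def)
  have e2: "(\<integral>\<^sup>+y. indicator {0..<1::real} x * indicator {0..<1::real} y \<partial>lborel) = indicator {0..<1} x" for x :: real
    by (subst nn_integral_cmult_indicator) auto
  show ?thesis unfolding e1 e2 by simp
qed

definition TK :: "nat \<Rightarrow> nat \<Rightarrow> real \<times> real \<Rightarrow> real \<times> real" where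
  "TK K j z = ((tau M a ^^ (j*K)) (fst z), (tau M a ^^ (j*K)) (snd z))"

lemma TK_meas[measurable]: "TK K j \<in> borel \<Otimes>\<^sub>M borel \<rightarrow>\<^sub>M borel \<Otimes>\<^sub>M borel"
  unfolding TK_def by measurable

lemma TK_add: "TK K j (TK K n z) = TK K (j + n) z"
  by (simp add: TK_def add_mult_distrib funpow_add)

definition Bad :: "nat list \<Rightarrow> nat list \<Rightarrow> nat \<Rightarrow> real \<times> real \<Rightarrow> bool" where
  "Bad w1 w2 m z \<longleftrightarrow> (\<forall>j<m. \<not> P2 w1 w2 (TK (length w1) j z))"

lemma Bad_meas[measurable]: "Measurable.pred (borel \<Otimes>\<^sub>M borel) (Bad w1 w2 m)"
  unfolding Bad_def by measurable

lemma Bad_Suc: "Bad w1 w2 (Suc m) z \<longleftrightarrow> \<not> P2 w1 w2 z \<and> Bad w1 w2 m (TK (length w1) 1 z)"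
proof -
  have "TK (length w1) j (TK (length w1) 1 z) = TK (length w1) (Suc j) z" for j
    using TK_add[of "length w1" j 1 z] by simp
  moreover have "TK (length w1) 0 z = z" by (simp add: TK_def)
  ultimately show ?thesis unfolding Bad_def All_less_Suc2 by simp
qed

lemma step:
  assumes psi[measurable]: "psi \<in> borel_measurable (borel \<Otimes>\<^sub>M borel)"
    and w: "set w1 \<subseteq> {1..M+1}" "set w2 \<subseteq> {1..M+1}" "length w1 = K" "length w2 = K"
    and fin: "(\<integral>\<^sup>+z. W z * psi z \<partial>Q2) \<noteq> \<infinity>"
  shows "(\<integral>\<^sup>+z. W z * (if \<not> P2 w1 w2 z then psi (TK K 1 z) else 0) \<partial>Q2)
     = ennreal (1 - prod_list (map pr w1) * prod_list (map pr w2)) * (\<integral>\<^sup>+z. W z * psi z \<partial>Q2)"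
proof -
  define q where "q = prod_list (map pr w1) * prod_list (map pr w2)"
  have q: "0 < q" "q \<le> 1" unfolding q_def using prl_pos prl_le1
    by (auto intro: mult_le_one less_imp_le)
  define I where "I = (\<integral>\<^sup>+z. W z * psi z \<partial>Q2)"
  define A where "A = (\<integral>\<^sup>+z. W z * (if P2 w1 w2 z then psi (TK K 1 z) else 0) \<partial>Q2)"
  define B where "B = (\<integral>\<^sup>+z. W z * (if \<not> P2 w1 w2 z then psi (TK K 1 z) else 0) \<partial>Q2)"
  have "A = ennreal q * I" unfolding A_def I_def q_def TK_def mult_1
    by (rule cyl2[OF psi w])
  moreover have "A + B = I"
  proof -
    have "A + B = (\<integral>\<^sup>+z. W z * (if P2 w1 w2 z then psi (TK K 1 z) else 0) + W z * (if \<not> P2 w1 w2 z then psi (TK K 1 z) else 0) \<partial>Q2)"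
      unfolding A_def B_def by (rule nn_integral_add[symmetric]) measurable
    also have "\<dots> = (\<integral>\<^sup>+z. W z * psi ((tau M a ^^ K) (fst z), (tau M a ^^ K) (snd z)) \<partial>Q2)"
      by (intro nn_integral_cong) (auto simp: TK_def)
    also have "\<dots> = I" unfolding I_def by (rule inv2) measurable
    finally show ?thesis .
  qed
  ultimately have AB: "ennreal q * I + B = I" by simp
  obtain r where r: "I = ennreal r" "0 \<le> r" using fin unfolding I_def by (cases I rule: ennreal_cases) (auto simp: I_def)
  have "B = I - ennreal q * I"
    using AB r by (metis add.commute ennreal_add_diff_cancel_right ennreal_mult_eq_top_iff ennreal_neq_top)
  also have "\<dots> = ennreal ((1 - q) * r)"
    using r q by (simp add: ennreal_mult'[symmetric] ennreal_minus algebra_simps)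
  finally show ?thesis using r q unfolding B_def q_def[symmetric] I_def[symmetric]
    by (simp add: ennreal_mult)
qed

lemma bad_int:
  assumes w: "set w1 \<subseteq> {1..M+1}" "set w2 \<subseteq> {1..M+1}" "length w1 = length w2"
  shows "(\<integral>\<^sup>+z. W z * (if Bad w1 w2 m z then 1 else 0) \<partial>Q2)
     = ennreal ((1 - prod_list (map pr w1) * prod_list (map pr w2)) ^ m)"
proof (induction m)
  case 0
  then show ?case using intW by (simp add: Bad_def)
next
  case (Suc m)
  define q where "q = prod_list (map pr w1) * prod_list (map pr w2)"
  have q: "0 < q" "q \<le> 1" unfolding q_def using prl_pos prl_le1
    by (auto intro: mult_le_one less_imp_le)
  have "(\<integral>\<^sup>+z. W z * (if Bad w1 w2 (Suc m) z then 1 else 0) \<partial>Q2)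
      = (\<integral>\<^sup>+z. W z * (if \<not> P2 w1 w2 z then (\<lambda>z. if Bad w1 w2 m z then 1 else 0) (TK (length w1) 1 z) else 0) \<partial>Q2)"
    by (intro nn_integral_cong) (auto simp: Bad_Suc)
  also have "\<dots> = ennreal (1 - q) * (\<integral>\<^sup>+z. W z * (if Bad w1 w2 m z then 1 else 0) \<partial>Q2)"
    unfolding q_def using Suc w by (intro step) auto
  also have "\<dots> = ennreal ((1 - q) ^ Suc m)" using Suc q unfolding q_def[symmetric]
    by (simp add: ennreal_mult)
  finally show ?case unfolding q_def .
qed

lemma le_pow_zero:
  fixes x :: ennreal and c :: real
  assumes "0 \<le> c" "c < 1" "\<And>m. x \<le> ennreal (c ^ m)"
  shows "x = 0"
proof -
  have "x \<noteq> \<infinity>" using assms(3)[of 0] by (auto simp: top_unique)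
  then obtain r where r: "x = ennreal r" "0 \<le> r" by (cases x rule: ennreal_cases) auto
  have "r \<le> c ^ m" for m using assms(3)[of m] r assms(1) by (simp add: ennreal_le_iff)
  moreover have "(\<lambda>m. c ^ m) \<longlonglongrightarrow> 0" using assms by (intro LIMSEQ_power_zero) auto
  ultimately have "r \<le> 0" by (intro LIMSEQ_le_const[of "\<lambda>m. c ^ m"]) auto
  then show ?thesis using r by simp
qed

lemma AE_pattern:
  assumes w: "set w1 \<subseteq> {1..M+1}" "set w2 \<subseteq> {1..M+1}" "length w1 = length w2"
  shows "AE z in Q2. W z \<noteq> 0 \<longrightarrow> (\<forall>N. \<exists>j\<ge>N. P2 w1 w2 (TK (length w1) j z))"
proof -
  define q where "q = prod_list (map pr w1) * prod_list (map pr w2)"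
  have q: "0 < q" "q \<le> 1" unfolding q_def using prl_pos prl_le1
    by (auto intro: mult_le_one less_imp_le)
  have "AE z in Q2. W z * (if (\<forall>j. \<not> P2 w1 w2 (TK (length w1) (j + N) z)) then 1 else 0) = 0" for N
  proof -
    have "(\<integral>\<^sup>+z. W z * (if (\<forall>j. \<not> P2 w1 w2 (TK (length w1) (j + N) z)) then 1 else 0) \<partial>Q2) = 0"
    proof (rule le_pow_zero)
      fix m
      have "(\<integral>\<^sup>+z. W z * (if (\<forall>j. \<not> P2 w1 w2 (TK (length w1) (j + N) z)) then 1 else 0) \<partial>Q2)
          \<le> (\<integral>\<^sup>+z. W z * (\<lambda>z. if Bad w1 w2 m z then 1 else 0) ((tau M a ^^ (N * length w1)) (fst z), (tau M a ^^ (N * length w1)) (snd z)) \<partial>Q2)"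
        by (intro nn_integral_mono) (auto simp: Bad_def TK_add[symmetric] TK_def[of _ N])
      also have "\<dots> = (\<integral>\<^sup>+z. W z * (if Bad w1 w2 m z then 1 else 0) \<partial>Q2)"
        by (rule inv2) measurable
      also have "\<dots> = ennreal ((1 - q) ^ m)" unfolding q_def using w by (rule bad_int)
      finally show "(\<integral>\<^sup>+z. W z * (if (\<forall>j. \<not> P2 w1 w2 (TK (length w1) (j + N) z)) then 1 else 0) \<partial>Q2) \<le> ennreal ((1 - q) ^ m)" .
    qed (use q in auto)
    then show ?thesis by (subst (asm) nn_integral_0_iff_AE) measurable
  qed
  then have "AE z in Q2. \<forall>N. W z * (if (\<forall>j. \<not> P2 w1 w2 (TK (length w1) (j + N) z)) then 1 else 0) = 0"
    by (subst AE_all_countable) auto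
  then show ?thesis
  proof (rule eventually_mono)
    fix z assume H: "\<forall>N. W z * (if (\<forall>j. \<not> P2 w1 w2 (TK (length w1) (j + N) z)) then 1 else 0) = 0"
    show "W z \<noteq> 0 \<longrightarrow> (\<forall>N. \<exists>j\<ge>N. P2 w1 w2 (TK (length w1) j z))"
    proof (intro impI allI)
      fix N assume "W z \<noteq> 0"
      then have "\<not> (\<forall>j. \<not> P2 w1 w2 (TK (length w1) (j + N) z))" using H[rule_format, of N] by (auto split: if_splits)
      then obtain j where "P2 w1 w2 (TK (length w1) (j + N) z)" by blast
      then show "\<exists>j\<ge>N. P2 w1 w2 (TK (length w1) j z)" by (intro exI[of _ "j + N"]) auto
    qed
  qed
qed

end

context LY begin

definition bb :: real where "bb = 1 / real M - a"
lemma bb_pos: "0 < bb" using asmall by (simp add: bb_def)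
lemma Mbb: "1 - real M * bb = real M * a" using Mpos by (simp add: bb_def field_simps)
lemma bb_lt1: "bb < 1"
proof -
  have "1 / real M \<le> 1" using M2 by simp
  then show ?thesis using apos by (simp add: bb_def)
qed

definition cupd :: "real \<Rightarrow> real \<Rightarrow> real" where
  "cupd u c = (if u < real M * a then c / real M + (real (alpha_idx a u) - 1) / real M
               else real M * c - real (beta_idx M c) + 1)"
definition supd :: "real \<Rightarrow> real \<Rightarrow> real \<Rightarrow> real" where
  "supd u c s = (if u < real M * a then (1 - real M * bb) * s
               else bb * s + 1 + bb * (real (beta_idx M c) - real M - 1))"

lemma f2_eq: "f2 M a (u, c) = (tau M a u, cupd u c)"
  by (simp add: f2_def cupd_def)
lemma f3_eq: "f3 M a bb (u, c, s) = (tau M a u, cupd u c, supd u c s)"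
  by (simp add: f3_def f2_def cupd_def supd_def)

lemma dig_le_iff: "dig u \<le> M \<longleftrightarrow> u < real M * a"
proof (cases "u < real M * a")
  case True
  have "alpha_idx a u \<le> M"
  proof (cases "0 \<le> u")
    case True then show ?thesis using alpha_idx_range \<open>u < real M * a\<close> by blast
  next
    case False
    then have "\<lfloor>u/a\<rfloor> < 0" using apos by (simp add: divide_neg_pos floor_less_iff)
    then show ?thesis using M2 by (simp add: alpha_idx_def)
  qed
  then show ?thesis using True by (simp add: dig_def)
qed (simp add: dig_def)

lemma u_decomp:
  assumes u: "u \<in> {0..<1}"
  shows "tau M a u \<in> {0..<1}" "u = ell (dig u) + pr (dig u) * tau M a u"
proof -
  define k where "k = dig u"
  have k: "k \<in> {1..M+1}" using alpha_idx_range[of u] u by (auto simp: k_def dig_def)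
  have up: "u \<in> piece k" using piece_iff[OF k] u k_def by simp
  define t where "t = (u - ell k) / pr k"
  have t: "t \<in> {0..<1}" using up pr_pos[of k] by (auto simp: piece_def t_def field_simps)
  have ht: "h k t = u" using pr_pos[of k] by (simp add: h_def t_def)
  have "tau M a u = t" using tau_h[OF k t] ht by simp
  then show "tau M a u \<in> {0..<1}" "u = ell (dig u) + pr (dig u) * tau M a u"
    using t ht by (auto simp: k_def h_def)
qed

lemma beta_idx_range: "0 \<le> c \<Longrightarrow> c \<le> 1 \<Longrightarrow> 1 \<le> beta_idx M c \<and> beta_idx M c \<le> M"
  using M2 by (auto simp: beta_idx_def)

lemma cupd_range:
  assumes "u \<in> {0..<1}" "0 \<le> c" "c \<le> 1" shows "0 \<le> cupd u c \<and> cupd u c \<le> 1"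
proof (cases "u < real M * a")
  case True
  have k: "1 \<le> alpha_idx a u" "alpha_idx a u \<le> M" using alpha_idx_range True assms by auto
  have "c / real M + (real (alpha_idx a u) - 1) / real M = (c + real (alpha_idx a u) - 1) / real M"
    using Mpos by (simp add: field_simps)
  moreover have "0 \<le> (c + real (alpha_idx a u) - 1) / real M" using k assms Mpos by simp
  moreover have "(c + real (alpha_idx a u) - 1) / real M \<le> 1" using k assms Mpos
    by (simp add: divide_le_eq_1)
  ultimately show ?thesis using True by (simp add: cupd_def)
next
  case False
  show ?thesis
  proof (cases "c < 1")
    case True
    have "real M * c < real M" using True Mpos by simp
    then have fl: "\<lfloor>real M * c\<rfloor> < int M" by (simp add: floor_less_iff)
    have fl0: "0 \<le> \<lfloor>real M * c\<rfloor>" using assms by simp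
    have "nat \<lfloor>real M * c\<rfloor> < M" using fl fl0 by (simp add: nat_less_iff)
    then have "beta_idx M c = nat \<lfloor>real M * c\<rfloor> + 1" by (simp add: beta_idx_def)
    then have "real (beta_idx M c) = real_of_int \<lfloor>real M * c\<rfloor> + 1" using fl0 by simp
    moreover have "real_of_int \<lfloor>real M * c\<rfloor> \<le> real M * c" "real M * c < real_of_int \<lfloor>real M * c\<rfloor> + 1"
      by linarith+
    moreover have "cupd u c = real M * c - real (beta_idx M c) + 1" using False by (simp add: cupd_def)
    ultimately show ?thesis by linarith
  next
    case False
    then have "c = 1" using assms by simp
    then show ?thesis using \<open>\<not> u < real M * a\<close> by (simp add: cupd_def beta_idx_def)
  qed
qed

lemma supd_range:
  assumes "u \<in> {0..<1}" "0 \<le> c" "c \<le> 1" "0 \<le> s" "s \<le> 1" shows "0 \<le> supd u c s \<and> supd u c s \<le> 1"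
proof (cases "u < real M * a")
  case True
  have "0 \<le> real M * a" "real M * a \<le> 1" using apos Ma_lt1 by auto
  then show ?thesis using True assms Mbb by (simp add: supd_def mult_le_one)
next
  case False
  have k: "1 \<le> beta_idx M c" "beta_idx M c \<le> M" using beta_idx_range assms by auto
  have "bb * s \<le> bb" using bb_pos assms by (simp add: mult_left_le)
  moreover have "0 \<le> bb * s" using bb_pos assms by simp
  moreover have "bb * (real (beta_idx M c) - real M - 1) \<le> - bb"
  proof -
    have "real (beta_idx M c) - real M - 1 \<le> -1" using k by simp
    from mult_left_mono[OF this, of bb] bb_pos show ?thesis by simp
  qed
  moreover have "bb * (real (beta_idx M c) - real M - 1) \<ge> - bb * real M"
  proof -
    have "- real M \<le> real (beta_idx M c) - real M - 1" using k by simp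
    from mult_left_mono[OF this, of bb] bb_pos show ?thesis by simp
  qed
  moreover have "1 - bb * real M \<ge> 0" using Mbb apos by (simp add: mult.commute)
  ultimately show ?thesis using False by (simp add: supd_def)
qed

definition Y :: "real \<Rightarrow> real \<Rightarrow> real \<Rightarrow> nat \<Rightarrow> real \<times> real \<times> real" where
  "Y u c s n = (f3 M a bb ^^ n) (u, c, s)"

lemma Y_Suc: "Y u c s (Suc n) = (tau M a (fst (Y u c s n)), cupd (fst (Y u c s n)) (fst (snd (Y u c s n))),
     supd (fst (Y u c s n)) (fst (snd (Y u c s n))) (snd (snd (Y u c s n))))"
  by (cases "Y u c s n") (simp add: Y_def f3_eq)

lemma Y_fst: "fst (Y u c s n) = (tau M a ^^ n) u"
  by (induction n) (simp_all add: Y_def[symmetric] Y_Suc, simp add: Y_def)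

lemma Y_f2: "(f2 M a ^^ n) (u, c) = (fst (Y u c s n), fst (snd (Y u c s n)))"
  by (induction n) (simp_all add: Y_Suc f2_eq, simp add: Y_def)

lemma Y_range:
  assumes "u \<in> {0..<1}" "0 \<le> c" "c \<le> 1" "0 \<le> s" "s \<le> 1"
  shows "fst (Y u c s n) \<in> {0..<1} \<and> 0 \<le> fst (snd (Y u c s n)) \<and> fst (snd (Y u c s n)) \<le> 1
       \<and> 0 \<le> snd (snd (Y u c s n)) \<and> snd (snd (Y u c s n)) \<le> 1"
proof (induction n)
  case 0 then show ?case using assms by (simp add: Y_def)
next
  case (Suc n)
  obtain u' c' s' where e: "Y u c s n = (u', c', s')" by (cases "Y u c s n") auto
  have "tau M a u' \<in> {0..<1}" using u_decomp(1) Suc e by simp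
  moreover have "0 \<le> cupd u' c' \<and> cupd u' c' \<le> 1" using cupd_range Suc e by simp
  moreover have "0 \<le> supd u' c' s' \<and> supd u' c' s' \<le> 1" using supd_range Suc e by simp
  ultimately show ?case by (simp add: Y_Suc e)
qed

end

context LY begin

lemma Ma_nonneg: "0 \<le> real M * a" using apos by simp

lemma dig1_props: assumes "dig x = 1" shows "x < real M * a" "alpha_idx a x = 1"
  using assms dig_le_iff[of x] M2 by (auto simp: dig_def split: if_splits)

lemma digM_props: assumes "dig x = M" shows "x < real M * a" "alpha_idx a x = M"
  using assms dig_le_iff[of x] M2 by (auto simp: dig_def split: if_splits)

lemma digB_props: assumes "dig x = M + 1" shows "\<not> x < real M * a"
  using assms dig_le_iff[of x] M2 by auto

lemma beta_idx_top: assumes "1 - c \<le> 1 / real M" "c \<le> 1" shows "beta_idx M c = M"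
proof -
  have "real M * (1 - c) \<le> 1" using assms Mpos by (simp add: field_simps)
  then have "real M - 1 \<le> real M * c" by (simp add: algebra_simps)
  then have "int M - 1 \<le> \<lfloor>real M * c\<rfloor>" by (simp add: le_floor_iff)
  then have "M \<le> nat \<lfloor>real M * c\<rfloor> + 1" by linarith
  then show ?thesis by (simp add: beta_idx_def)
qed

context
  fixes u c s :: real
  assumes R: "u \<in> {0..<1}" "0 \<le> c" "c \<le> 1" "0 \<le> s" "s \<le> 1"
begin

abbreviation "UU n \<equiv> fst (Y u c s n)"
abbreviation "CC n \<equiv> fst (snd (Y u c s n))"
abbreviation "SS n \<equiv> snd (snd (Y u c s n))"

lemma rng: "UU n \<in> {0..<1}" "0 \<le> CC n" "CC n \<le> 1" "0 \<le> SS n" "SS n \<le> 1"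
  using Y_range[OF R, of n] by auto

lemma CC_Suc: "CC (Suc n) = cupd (UU n) (CC n)" and SS_Suc: "SS (Suc n) = supd (UU n) (CC n) (SS n)"
  and UU_Suc: "UU (Suc n) = tau M a (UU n)"
  by (simp_all add: Y_Suc)

lemma L1: "(\<forall>i<L. dig (UU (t+i)) = 1) \<Longrightarrow> CC (t+L) \<le> (1/real M)^L \<and> SS (t+L) \<le> (real M * a)^L"
proof (induction L)
  case 0 then show ?case using rng by simp
next
  case (Suc L)
  then have IH: "CC (t+L) \<le> (1/real M)^L" "SS (t+L) \<le> (real M * a)^L" by auto
  have d: "dig (UU (t+L)) = 1" using Suc.prems by auto
  have CCs: "CC (t + Suc L) = cupd (UU (t+L)) (CC (t+L))" using CC_Suc[of "t+L"] by simp
  have SSs: "SS (t + Suc L) = supd (UU (t+L)) (CC (t+L)) (SS (t+L))" using SS_Suc[of "t+L"] by simp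
  have c: "CC (t + Suc L) = CC (t+L) / real M"
    unfolding CCs using dig1_props[OF d] by (simp add: cupd_def)
  have s: "SS (t + Suc L) = real M * a * SS (t+L)"
    unfolding SSs using dig1_props[OF d] Mbb by (simp add: supd_def)
  have "CC (t+L) / real M \<le> (1/real M)^L / real M" using IH Mpos by (simp add: divide_right_mono)
  moreover have "real M * a * SS (t+L) \<le> real M * a * (real M * a)^L" using IH Ma_nonneg by (simp add: mult_left_mono)
  ultimately show ?case using c s by (simp add: power_Suc2 field_simps)
qed

lemma L2: "(\<forall>i<L. dig (UU (t+i)) = M) \<Longrightarrow> 1 - CC (t+L) \<le> (1/real M)^L"
proof (induction L)
  case 0 then show ?case using rng by simp
next
  case (Suc L)
  then have IH: "1 - CC (t+L) \<le> (1/real M)^L" by auto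
  have d: "dig (UU (t+L)) = M" using Suc.prems by auto
  have CCs: "CC (t + Suc L) = cupd (UU (t+L)) (CC (t+L))" using CC_Suc[of "t+L"] by simp
  have c: "1 - CC (t + Suc L) = (1 - CC (t+L)) / real M"
    unfolding CCs using digM_props[OF d] Mpos by (simp add: cupd_def field_simps)
  have "(1 - CC (t+L)) / real M \<le> (1/real M)^L / real M" using IH Mpos by (simp add: divide_right_mono)
  then show ?case using c by (simp add: power_Suc2 field_simps)
qed

lemma L3: assumes "1 \<le> L" "1 - CC t \<le> (1/real M)^(2*L)"
  shows "J \<le> L \<Longrightarrow> (\<forall>i<J. dig (UU (t+i)) = M+1) \<Longrightarrow> 1 - CC (t+J) \<le> (1/real M)^(2*L-J) \<and> 1 - SS (t+J) \<le> bb^J"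
proof (induction J)
  case 0 then show ?case using rng assms by simp
next
  case (Suc J)
  then have IH: "1 - CC (t+J) \<le> (1/real M)^(2*L-J)" "1 - SS (t+J) \<le> bb^J" by auto
  have d: "dig (UU (t+J)) = M+1" using Suc.prems by auto
  have CCs: "CC (t + Suc J) = cupd (UU (t+J)) (CC (t+J))" using CC_Suc[of "t+J"] by simp
  have SSs: "SS (t + Suc J) = supd (UU (t+J)) (CC (t+J)) (SS (t+J))" using SS_Suc[of "t+J"] by simp
  have "(1/real M)^(2*L-J) \<le> (1/real M)^1"
    using Suc.prems Mpos M2 by (intro power_decreasing) (auto simp: field_simps)
  then have top: "beta_idx M (CC (t+J)) = M" using IH rng by (intro beta_idx_top) auto
  have c: "1 - CC (t + Suc J) = real M * (1 - CC (t+J))"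
    unfolding CCs using digB_props[OF d] top by (simp add: cupd_def algebra_simps)
  have s: "1 - SS (t + Suc J) = bb * (1 - SS (t+J))"
    unfolding SSs using digB_props[OF d] top by (simp add: supd_def algebra_simps)
  have "real M * (1 - CC (t+J)) \<le> real M * (1/real M)^(2*L-J)" using IH Mpos by simp
  also have "\<dots> = (1/real M)^(2*L - Suc J)"
  proof -
    have "2*L-J = Suc (2*L - Suc J)" using Suc.prems by simp
    then show ?thesis using Mpos by (simp add: field_simps)
  qed
  finally have 1: "1 - CC (t + Suc J) \<le> (1/real M)^(2*L - Suc J)" using c by simp
  have "bb * (1 - SS (t+J)) \<le> bb * bb^J" using IH bb_pos by (simp add: mult_left_mono)
  then show ?case using 1 s by simp
qed

lemma L4: "(\<forall>i<L. dig (UU (n+i)) = 1) \<Longrightarrow> UU n \<le> a^L"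
proof (induction L arbitrary: n)
  case 0 then show ?case using rng by (simp add: less_imp_le)
next
  case (Suc L)
  have d: "dig (UU n) = 1" using Suc.prems by auto
  have "\<forall>i<L. dig (UU (Suc n+i)) = 1" using Suc.prems by (auto simp del: Y_fst)
  then have IH: "UU (Suc n) \<le> a^L" using Suc.IH by blast
  have "UU n = a * UU (Suc n)"
    using u_decomp(2)[OF rng(1)[of n]] d UU_Suc[of n] M2 by (simp add: ell_def pr_def)
  then show ?case using IH apos by (simp add: mult_left_mono)
qed

lemma L5: "(\<forall>i<L. dig (UU (n+i)) = M+1) \<Longrightarrow> 1 - UU n \<le> (1 - real M * a)^L"
proof (induction L arbitrary: n)
  case 0 then show ?case using rng by simp
next
  case (Suc L)
  have d: "dig (UU n) = M+1" using Suc.prems by auto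
  have "\<forall>i<L. dig (UU (Suc n+i)) = M+1" using Suc.prems by (auto simp del: Y_fst)
  then have IH: "1 - UU (Suc n) \<le> (1 - real M * a)^L" using Suc.IH by blast
  have "UU n = real M * a + (1 - real M * a) * UU (Suc n)"
    using u_decomp(2)[OF rng(1)[of n]] d UU_Suc[of n] by (simp add: ell_def pr_def)
  then have "1 - UU n = (1 - real M * a) * (1 - UU (Suc n))" by (simp add: algebra_simps)
  then show ?case using IH Ma_lt1 by (simp add: mult_left_mono)
qed

end

end


lemma liminf_zero:
  fixes X :: "nat \<Rightarrow> real"
  assumes nn: "\<And>n. 0 \<le> X n" and fr: "\<And>e N. e > 0 \<Longrightarrow> \<exists>n\<ge>N. X n \<le> e"
  shows "liminf (\<lambda>n. ereal (X n)) = 0"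
proof (rule antisym)
  show "0 \<le> liminf (\<lambda>n. ereal (X n))" by (rule Liminf_bounded) (use nn in auto)
  show "liminf (\<lambda>n. ereal (X n)) \<le> 0"
  proof (rule ccontr)
    assume "\<not> ?thesis"
    then have "0 < liminf (\<lambda>n. ereal (X n))" by simp
    then obtain y where y: "0 < y" "y < liminf (\<lambda>n. ereal (X n))" using dense[of 0] by blast
    have "\<forall>y<liminf (\<lambda>n. ereal (X n)). eventually (\<lambda>n. y < ereal (X n)) sequentially"
      using le_Liminf_iff[where C="liminf (\<lambda>n. ereal (X n))" and F=sequentially and X="\<lambda>n. ereal (X n)"] by simp
    then have "eventually (\<lambda>n. y < ereal (X n)) sequentially" using y(2) by blast
    then obtain N where N: "\<And>n. n \<ge> N \<Longrightarrow> y < ereal (X n)" by (auto simp: eventually_sequentially)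
    have "y \<noteq> \<infinity>" using y by auto
    then obtain e where e: "y = ereal e" "0 < e" using y by (cases y) auto
    obtain n where "n \<ge> N" "X n \<le> e" using fr[OF e(2)] by blast
    then show False using N[of n] e by simp
  qed
qed

lemma limsup_top:
  fixes X :: "nat \<Rightarrow> real"
  assumes le: "\<And>n. X n \<le> B" and fr: "\<And>e N. e > 0 \<Longrightarrow> \<exists>n\<ge>N. B - e \<le> X n"
  shows "limsup (\<lambda>n. ereal (X n)) = ereal B"
proof (rule antisym)
  show "limsup (\<lambda>n. ereal (X n)) \<le> ereal B" by (rule Limsup_bounded) (use le in auto)
  show "ereal B \<le> limsup (\<lambda>n. ereal (X n))"
  proof (rule ccontr)
    assume "\<not> ?thesis"
    then have "limsup (\<lambda>n. ereal (X n)) < ereal B" by simp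
    then obtain y where y: "limsup (\<lambda>n. ereal (X n)) < y" "y < ereal B" using dense[of _ "ereal B"] by blast
    have "\<forall>y>limsup (\<lambda>n. ereal (X n)). eventually (\<lambda>n. y > ereal (X n)) sequentially"
      using Limsup_le_iff[where C="limsup (\<lambda>n. ereal (X n))" and F=sequentially and X="\<lambda>n. ereal (X n)"] by simp
    then have "eventually (\<lambda>n. y > ereal (X n)) sequentially" using y(1) by blast
    then obtain N where N: "\<And>n. n \<ge> N \<Longrightarrow> y > ereal (X n)" by (auto simp: eventually_sequentially)
    have "y \<noteq> -\<infinity>" using y by auto
    then obtain e where e: "y = ereal e" "e < B" using y by (cases y) auto
    have "0 < B - e" using e by simp
    then obtain n where "n \<ge> N" "B - (B - e) \<le> X n" using fr[of "B - e" N] by blast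
    then show False using N[of n] e by simp
  qed
qed

lemma dist3: "dist ((u1::real), (c1::real), (s1::real)) (u2, c2, s2) = sqrt ((u1-u2)^2 + (c1-c2)^2 + (s1-s2)^2)"
  by (simp add: dist_Pair_Pair dist_real_def)

lemma dist2: "dist ((u1::real), (c1::real)) (u2, c2) = sqrt ((u1-u2)^2 + (c1-c2)^2)"
  by (simp add: dist_Pair_Pair dist_real_def)

lemma sq_le: "\<bar>x::real\<bar> \<le> d \<Longrightarrow> x^2 \<le> d^2"
  using power_mono[of "\<bar>x\<bar>" d 2] by simp

lemma sq_ge: "0 \<le> d \<Longrightarrow> d \<le> \<bar>x::real\<bar> \<Longrightarrow> d^2 \<le> x^2"
  using power_mono[of d "\<bar>x\<bar>" 2] by simp

lemma near3: "\<bar>x\<bar> \<le> d \<Longrightarrow> \<bar>y\<bar> \<le> d \<Longrightarrow> \<bar>z::real\<bar> \<le> d \<Longrightarrow> sqrt (x^2 + y^2 + z^2) \<le> 2 * d"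
proof -
  assume a: "\<bar>x\<bar> \<le> d" "\<bar>y\<bar> \<le> d" "\<bar>z::real\<bar> \<le> d"
  then have "0 \<le> d" by auto
  have e: "(2*d)^2 = 4*d^2" by (simp add: power_mult_distrib)
  have "x^2 + y^2 + z^2 \<le> (2*d)^2" unfolding e using sq_le[OF a(1)] sq_le[OF a(2)] sq_le[OF a(3)] zero_le_power2[of d] by linarith
  then show ?thesis using \<open>0 \<le> d\<close> by (simp add: real_sqrt_le_iff real_le_lsqrt)
qed

lemma near2: "\<bar>x\<bar> \<le> d \<Longrightarrow> \<bar>y::real\<bar> \<le> d \<Longrightarrow> sqrt (x^2 + y^2) \<le> 2 * d"
  using near3[of x d y 0] by simp

lemma far3: "0 \<le> d \<Longrightarrow> d \<le> \<bar>x\<bar> \<Longrightarrow> d \<le> \<bar>y\<bar> \<Longrightarrow> d \<le> \<bar>z::real\<bar> \<Longrightarrow> sqrt 3 * d \<le> sqrt (x^2 + y^2 + z^2)"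
proof -
  assume a: "0 \<le> d" "d \<le> \<bar>x\<bar>" "d \<le> \<bar>y\<bar>" "d \<le> \<bar>z::real\<bar>"
  have "3 * d^2 \<le> x^2 + y^2 + z^2" using sq_ge[OF a(1,2)] sq_ge[OF a(1,3)] sq_ge[OF a(1,4)] by simp
  then have "sqrt (3 * d^2) \<le> sqrt (x^2 + y^2 + z^2)" by simp
  then show ?thesis using a(1) by (simp add: real_sqrt_mult)
qed

lemma far2: "0 \<le> d \<Longrightarrow> d \<le> \<bar>x\<bar> \<Longrightarrow> d \<le> \<bar>y::real\<bar> \<Longrightarrow> sqrt 2 * d \<le> sqrt (x^2 + y^2)"
proof -
  assume a: "0 \<le> d" "d \<le> \<bar>x\<bar>" "d \<le> \<bar>y::real\<bar>"
  have "2 * d^2 \<le> x^2 + y^2" using sq_ge[OF a(1,2)] sq_ge[OF a(1,3)] by simp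
  then have "sqrt (2 * d^2) \<le> sqrt (x^2 + y^2)" by simp
  then show ?thesis using a(1) by (simp add: real_sqrt_mult)
qed

lemma box3: "\<bar>x\<bar> \<le> 1 \<Longrightarrow> \<bar>y\<bar> \<le> 1 \<Longrightarrow> \<bar>z::real\<bar> \<le> 1 \<Longrightarrow> sqrt (x^2 + y^2 + z^2) \<le> sqrt 3"
proof -
  assume a: "\<bar>x\<bar> \<le> 1" "\<bar>y\<bar> \<le> 1" "\<bar>z::real\<bar> \<le> 1"
  have "x^2 + y^2 + z^2 \<le> 3" using sq_le[OF a(1)] sq_le[OF a(2)] sq_le[OF a(3)] by simp
  then show ?thesis by simp
qed

lemma box2: "\<bar>x\<bar> \<le> 1 \<Longrightarrow> \<bar>y::real\<bar> \<le> 1 \<Longrightarrow> sqrt (x^2 + y^2) \<le> sqrt 2"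
proof -
  assume a: "\<bar>x\<bar> \<le> 1" "\<bar>y::real\<bar> \<le> 1"
  have "x^2 + y^2 \<le> 2" using sq_le[OF a(1)] sq_le[OF a(2)] by simp
  then show ?thesis by simp
qed


context LY begin

lemma mdig:
  assumes "matches w ((tau M a ^^ t0) u)" "i < length w"
  shows "dig (fst (Y u c s (t0+i))) = w ! i"
proof -
  have "(tau M a ^^ (i + t0)) u = (tau M a ^^ i) ((tau M a ^^ t0) u)"
    by (simp add: funpow_add)
  then have "(tau M a ^^ i) ((tau M a ^^ t0) u) = (tau M a ^^ (t0+i)) u"
    by (simp add: add.commute)
  moreover have "dig ((tau M a ^^ i) ((tau M a ^^ t0) u)) = w ! i" using assms unfolding matches_def by blast
  ultimately show ?thesis by (simp add: Y_fst)
qed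

definition w0 :: "nat \<Rightarrow> nat list" where "w0 L = replicate (4*L) 1"
definition w1 :: "nat \<Rightarrow> nat list" where "w1 L = replicate (2*L) M @ replicate (2*L) (M+1)"

lemma w_len: "length (w0 L) = 4*L" "length (w1 L) = 4*L" by (simp_all add: w0_def w1_def)
lemma w_set: "set (w0 L) \<subseteq> {1..M+1}" "set (w1 L) \<subseteq> {1..M+1}"
  using M2 by (auto simp: w0_def w1_def)

lemma corner0:
  assumes R: "u \<in> {0..<1}" "0 \<le> c" "c \<le> 1" "0 \<le> s" "s \<le> 1"
    and m: "matches (w0 L) ((tau M a ^^ t0) u)"
  shows "fst (Y u c s (t0+3*L)) \<le> a^L \<and> fst (snd (Y u c s (t0+3*L))) \<le> (1/real M)^L
       \<and> snd (snd (Y u c s (t0+3*L))) \<le> (real M * a)^L"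
proof -
  have d: "dig (fst (Y u c s (t0+i))) = 1" if "i < 4*L" for i
    using mdig[OF m, of i c s] that by (simp add: w0_def)
  have "\<forall>i<L. dig (fst (Y u c s (t0+2*L+i))) = 1"
    using d[of "2*L+_"] by (simp add: add.assoc)
  from L1[OF R this] have 1: "fst (snd (Y u c s (t0+3*L))) \<le> (1/real M)^L \<and> snd (snd (Y u c s (t0+3*L))) \<le> (real M * a)^L"
    by (simp add: add.assoc)
  have "\<forall>i<L. dig (fst (Y u c s (t0+3*L+i))) = 1"
    using d[of "3*L+_"] by (simp add: add.assoc)
  from L4[OF R this] 1 show ?thesis by simp
qed

lemma corner1:
  assumes R: "u \<in> {0..<1}" "0 \<le> c" "c \<le> 1" "0 \<le> s" "s \<le> 1" and L: "1 \<le> L"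
    and m: "matches (w1 L) ((tau M a ^^ t0) u)"
  shows "1 - fst (Y u c s (t0+3*L)) \<le> (1 - real M * a)^L \<and> 1 - fst (snd (Y u c s (t0+3*L))) \<le> (1/real M)^L
       \<and> 1 - snd (snd (Y u c s (t0+3*L))) \<le> bb^L"
proof -
  have dM: "dig (fst (Y u c s (t0+i))) = M" if "i < 2*L" for i
    using mdig[OF m, of i c s] that by (simp add: w1_def nth_append)
  have dB: "dig (fst (Y u c s (t0+2*L+i))) = M+1" if "i < 2*L" for i
    using mdig[OF m, of "2*L+i" c s] that by (simp add: w1_def nth_append add.assoc)
  have "1 - fst (snd (Y u c s (t0+2*L))) \<le> (1/real M)^(2*L)"
    using L2[OF R, of "2*L" t0] dM by blast
  moreover have B: "\<forall>i<L. dig (fst (Y u c s (t0+2*L+i))) = M+1" using dB by simp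
  ultimately have "1 - fst (snd (Y u c s (t0+2*L+L))) \<le> (1/real M)^(2*L-L) \<and> 1 - snd (snd (Y u c s (t0+2*L+L))) \<le> bb^L"
    using L3[OF R L, where t="t0+2*L" and J=L] by blast
  moreover have "t0+2*L+L = t0+3*L" "2*L-L = L" by simp_all
  ultimately have 1: "1 - fst (snd (Y u c s (t0+3*L))) \<le> (1/real M)^L \<and> 1 - snd (snd (Y u c s (t0+3*L))) \<le> bb^L"
    by simp
  have "\<forall>i<L. dig (fst (Y u c s (t0+3*L+i))) = M+1"
    using dB[of "L+_"] by (simp add: add.assoc)
  from L5[OF R this] 1 show ?thesis by simp
qed

definition rho :: real where "rho = max (max a (1/real M)) (max (max (real M * a) bb) (1 - real M * a))"

lemma rho: "0 \<le> rho" "rho < 1" "a \<le> rho" "1/real M \<le> rho" "real M * a \<le> rho" "bb \<le> rho" "1 - real M * a \<le> rho"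
proof -
  have "1/real M < 1" using M2 by simp
  then have "a < 1" using asmall by linarith
  then show "0 \<le> rho" "rho < 1" "a \<le> rho" "1/real M \<le> rho" "real M * a \<le> rho" "bb \<le> rho" "1 - real M * a \<le> rho"
    using apos Ma_lt1 bb_lt1 \<open>1/real M < 1\<close> Mpos by (auto simp: rho_def)
qed

lemma powle: "0 \<le> x \<Longrightarrow> x \<le> rho \<Longrightarrow> x^L \<le> rho^L"
  by (rule power_mono)

lemma small_L:
  assumes "e > 0" shows "\<exists>L\<ge>1. rho^L \<le> e"
proof (cases "rho = 0")
  case True then show ?thesis by (intro exI[of _ 1]) (use assms in auto)
next
  case False
  then have "0 < rho" using rho by simp
  obtain L where "rho^L < e" using real_arch_pow_inv[OF assms rho(2)] by blast
  moreover have "rho^(Suc L) \<le> rho^L" using rho by (intro power_decreasing) auto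
  ultimately show ?thesis by (intro exI[of _ "Suc L"]) auto
qed

end

context LY begin

lemma sqrt3_le2: "sqrt 3 \<le> 2" by (rule real_le_lsqrt) auto
lemma sqrt2_le2: "sqrt 2 \<le> 2" by (rule real_le_lsqrt) auto

lemma LY_pair:
  assumes Ru: "u \<in> {0..<1}" "v \<in> {0..<1}"
    and Rc: "0 \<le> c1" "c1 \<le> 1" "0 \<le> s1" "s1 \<le> 1" "0 \<le> c2" "c2 \<le> 1" "0 \<le> s2" "s2 \<le> 1"
    and H0: "\<forall>L\<ge>1. \<forall>N. \<exists>j\<ge>N. P2 (w0 L) (w0 L) (TK (4*L) j (u, v))"
    and H1: "\<forall>L\<ge>1. \<forall>N. \<exists>j\<ge>N. P2 (w0 L) (w1 L) (TK (4*L) j (u, v))"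
  shows "liminf (\<lambda>n. ereal (dist (Y u c1 s1 n) (Y v c2 s2 n))) = 0 \<and>
         limsup (\<lambda>n. ereal (dist (Y u c1 s1 n) (Y v c2 s2 n))) = ereal (sqrt 3) \<and>
         liminf (\<lambda>n. ereal (dist ((f2 M a ^^ n) (u, c1)) ((f2 M a ^^ n) (v, c2)))) = 0 \<and>
         limsup (\<lambda>n. ereal (dist ((f2 M a ^^ n) (u, c1)) ((f2 M a ^^ n) (v, c2)))) = ereal (sqrt 2)"
proof -
  define U1 where "U1 n = fst (Y u c1 s1 n)" for n
  define C1 where "C1 n = fst (snd (Y u c1 s1 n))" for n
  define S1 where "S1 n = snd (snd (Y u c1 s1 n))" for n
  define U2 where "U2 n = fst (Y v c2 s2 n)" for n
  define C2 where "C2 n = fst (snd (Y v c2 s2 n))" for n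
  define S2 where "S2 n = snd (snd (Y v c2 s2 n))" for n
  have D3: "dist (Y u c1 s1 n) (Y v c2 s2 n) = sqrt ((U1 n - U2 n)^2 + (C1 n - C2 n)^2 + (S1 n - S2 n)^2)" for n
  proof -
    have "Y u c1 s1 n = (U1 n, C1 n, S1 n)" "Y v c2 s2 n = (U2 n, C2 n, S2 n)"
      by (simp_all add: U1_def C1_def S1_def U2_def C2_def S2_def)
    then show ?thesis by (simp add: dist3)
  qed
  have D2: "dist ((f2 M a ^^ n) (u, c1)) ((f2 M a ^^ n) (v, c2)) = sqrt ((U1 n - U2 n)^2 + (C1 n - C2 n)^2)" for n
    using Y_f2[of n u c1 s1] Y_f2[of n v c2 s2] by (simp add: dist2 U1_def C1_def U2_def C2_def)
  have rng1: "0 \<le> U1 n \<and> U1 n \<le> 1 \<and> 0 \<le> C1 n \<and> C1 n \<le> 1 \<and> 0 \<le> S1 n \<and> S1 n \<le> 1" for n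
    using Y_range[of u c1 s1 n] Ru Rc by (auto simp: U1_def C1_def S1_def)
  have rng2: "0 \<le> U2 n \<and> U2 n \<le> 1 \<and> 0 \<le> C2 n \<and> C2 n \<le> 1 \<and> 0 \<le> S2 n \<and> S2 n \<le> 1" for n
    using Y_range[of v c2 s2 n] Ru Rc by (auto simp: U2_def C2_def S2_def)
  have abs1: "\<bar>x - y\<bar> \<le> 1" if "0 \<le> x" "x \<le> 1" "0 \<le> y" "y \<le> 1" for x y :: real using that by auto
  have zero: "\<exists>n\<ge>N. sqrt ((U1 n - U2 n)^2 + (C1 n - C2 n)^2 + (S1 n - S2 n)^2) \<le> e \<and> sqrt ((U1 n - U2 n)^2 + (C1 n - C2 n)^2) \<le> e"
    if e: "e > 0" for e N
  proof -
    obtain L where L: "L \<ge> 1" "rho^L \<le> e/2" using small_L[of "e/2"] e by auto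
    obtain j where j: "j \<ge> N" "P2 (w0 L) (w0 L) (TK (4*L) j (u, v))" using H0 L(1) by blast
    define n where "n = j*(4*L) + 3*L"
    have jj: "j \<le> j*(4*L)" using L(1) by simp
    have nN: "n \<ge> N" unfolding n_def using j(1) jj by linarith
    have m: "matches (w0 L) ((tau M a ^^ (j*(4*L))) u)" "matches (w0 L) ((tau M a ^^ (j*(4*L))) v)"
      using j(2) by (auto simp: P2_def TK_def)
    have c1: "U1 n \<le> rho^L \<and> C1 n \<le> rho^L \<and> S1 n \<le> rho^L"
      using corner0[OF Ru(1) Rc(1-4) m(1)] powle[of a L] powle[of "1/real M" L] powle[of "real M * a" L] rho apos Mpos Ma_nonneg
      by (auto simp: U1_def C1_def S1_def n_def)
    have c2: "U2 n \<le> rho^L \<and> C2 n \<le> rho^L \<and> S2 n \<le> rho^L"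
      using corner0[OF Ru(2) Rc(5-8) m(2)] powle[of a L] powle[of "1/real M" L] powle[of "real M * a" L] rho apos Mpos Ma_nonneg
      by (auto simp: U2_def C2_def S2_def n_def)
    have "\<bar>U1 n - U2 n\<bar> \<le> rho^L" "\<bar>C1 n - C2 n\<bar> \<le> rho^L" "\<bar>S1 n - S2 n\<bar> \<le> rho^L"
      using c1 c2 rng1[of n] rng2[of n] by auto
    then have "sqrt ((U1 n - U2 n)^2 + (C1 n - C2 n)^2 + (S1 n - S2 n)^2) \<le> 2 * rho^L"
      "sqrt ((U1 n - U2 n)^2 + (C1 n - C2 n)^2) \<le> 2 * rho^L"
      by (auto intro: near3 near2)
    then show ?thesis using nN L(2) by (intro exI[of _ n]) auto
  qed
  have far: "\<exists>n\<ge>N. sqrt 3 - e \<le> sqrt ((U1 n - U2 n)^2 + (C1 n - C2 n)^2 + (S1 n - S2 n)^2) \<and> sqrt 2 - e \<le> sqrt ((U1 n - U2 n)^2 + (C1 n - C2 n)^2)"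
    if e: "e > 0" for e N
  proof -
    obtain L where L: "L \<ge> 1" "rho^L \<le> min (e/4) (1/4)" using small_L[of "min (e/4) (1/4)"] e by auto
    obtain j where j: "j \<ge> N" "P2 (w0 L) (w1 L) (TK (4*L) j (u, v))" using H1 L(1) by blast
    define n where "n = j*(4*L) + 3*L"
    have jj: "j \<le> j*(4*L)" using L(1) by simp
    have nN: "n \<ge> N" unfolding n_def using j(1) jj by linarith
    have m: "matches (w0 L) ((tau M a ^^ (j*(4*L))) u)" "matches (w1 L) ((tau M a ^^ (j*(4*L))) v)"
      using j(2) by (auto simp: P2_def TK_def)
    have c1: "U1 n \<le> rho^L \<and> C1 n \<le> rho^L \<and> S1 n \<le> rho^L"
      using corner0[OF Ru(1) Rc(1-4) m(1)] powle[of a L] powle[of "1/real M" L] powle[of "real M * a" L] rho apos Mpos Ma_nonneg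
      by (auto simp: U1_def C1_def S1_def n_def)
    have c2: "1 - U2 n \<le> rho^L \<and> 1 - C2 n \<le> rho^L \<and> 1 - S2 n \<le> rho^L"
      using corner1[OF Ru(2) Rc(5-8) L(1) m(2)] powle[of "1 - real M * a" L] powle[of "1/real M" L] powle[of bb L] rho Ma_lt1 Mpos bb_pos
      by (auto simp: U2_def C2_def S2_def n_def)
    define d where "d = 1 - 2 * rho^L"
    have d0: "0 \<le> d" using L(2) by (simp add: d_def)
    have "d \<le> \<bar>U1 n - U2 n\<bar>" "d \<le> \<bar>C1 n - C2 n\<bar>" "d \<le> \<bar>S1 n - S2 n\<bar>"
      using c1 c2 by (auto simp: d_def)
    then have f3: "sqrt 3 * d \<le> sqrt ((U1 n - U2 n)^2 + (C1 n - C2 n)^2 + (S1 n - S2 n)^2)"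
      and f2: "sqrt 2 * d \<le> sqrt ((U1 n - U2 n)^2 + (C1 n - C2 n)^2)"
      using d0 by (auto intro: far3 far2)
    have "sqrt 3 * (2 * rho^L) \<le> 2 * (2 * rho^L)" using sqrt3_le2 rho(1) by (intro mult_right_mono) auto
    then have "sqrt 3 - e \<le> sqrt 3 * d" using L(2) by (simp add: d_def algebra_simps)
    moreover have "sqrt 2 * (2 * rho^L) \<le> 2 * (2 * rho^L)" using sqrt2_le2 rho(1) by (intro mult_right_mono) auto
    then have "sqrt 2 - e \<le> sqrt 2 * d" using L(2) by (simp add: d_def algebra_simps)
    ultimately show ?thesis using f3 f2 nN by (intro exI[of _ n]) auto
  qed
  have bnd3: "sqrt ((U1 n - U2 n)^2 + (C1 n - C2 n)^2 + (S1 n - S2 n)^2) \<le> sqrt 3" for n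
    using rng1[of n] rng2[of n] by (intro box3 abs1) auto
  have bnd2: "sqrt ((U1 n - U2 n)^2 + (C1 n - C2 n)^2) \<le> sqrt 2" for n
    using rng1[of n] rng2[of n] by (intro box2 abs1) auto
  show ?thesis unfolding D3 D2
  proof (intro conjI)
    show "liminf (\<lambda>n. ereal (sqrt ((U1 n - U2 n)^2 + (C1 n - C2 n)^2 + (S1 n - S2 n)^2))) = 0"
      apply (rule liminf_zero)
       apply simp
      using zero apply blast
      done
    show "limsup (\<lambda>n. ereal (sqrt ((U1 n - U2 n)^2 + (C1 n - C2 n)^2 + (S1 n - S2 n)^2))) = ereal (sqrt 3)"
      apply (rule limsup_top)
       apply (rule bnd3)
      using far apply blast
      done
    show "liminf (\<lambda>n. ereal (sqrt ((U1 n - U2 n)^2 + (C1 n - C2 n)^2))) = 0"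
      apply (rule liminf_zero)
       apply simp
      using zero apply blast
      done
    show "limsup (\<lambda>n. ereal (sqrt ((U1 n - U2 n)^2 + (C1 n - C2 n)^2))) = ereal (sqrt 2)"
      apply (rule limsup_top)
       apply (rule bnd2)
      using far apply blast
      done
  qed
qed

end


lemma AE_fst_lift:
  assumes "AE x in (lborel :: 'a::euclidean_space measure). P x"
  shows "AE z in (lborel :: ('a \<times> 'b::euclidean_space) measure). P (fst z)"
proof -
  obtain N where N: "N \<in> null_sets lborel" "{x \<in> space lborel. \<not> P x} \<subseteq> N"
    using assms unfolding eventually_ae_filter by blast
  have "N \<times> UNIV \<in> null_sets (lborel \<Otimes>\<^sub>M (lborel :: 'b measure))"
    using N by (intro lborel.times_in_null_sets1) auto
  then have "AE z in (lborel \<Otimes>\<^sub>M (lborel :: 'b measure)). P (fst z)"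
    by (rule AE_I') (use N in auto)
  then show ?thesis by (metis lborel_prod)
qed

lemma AE_snd_lift:
  assumes "AE x in (lborel :: 'a::euclidean_space measure). P x"
  shows "AE z in (lborel :: ('b::euclidean_space \<times> 'a) measure). P (snd z)"
proof -
  obtain N where N: "N \<in> null_sets lborel" "{x \<in> space lborel. \<not> P x} \<subseteq> N"
    using assms unfolding eventually_ae_filter by blast
  have "UNIV \<times> N \<in> null_sets ((lborel :: 'b measure) \<Otimes>\<^sub>M lborel)"
    using N by (intro lborel.times_in_null_sets2) auto
  then have "AE z in ((lborel :: 'b measure) \<Otimes>\<^sub>M lborel). P (snd z)"
    by (rule AE_I') (use N in auto)
  then show ?thesis by (metis lborel_prod)
qed

lemma lift4:
  fixes Phi :: "real \<times> real \<Rightarrow> bool"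
  assumes meas: "Measurable.pred (borel \<Otimes>\<^sub>M borel) Phi"
    and ae: "AE z in (lborel \<Otimes>\<^sub>M lborel). Phi z"
  shows "AE p in (lborel :: ((real \<times> 'b::euclidean_space) \<times> (real \<times> 'b)) measure). Phi (fst (fst p), fst (snd p))"
proof -
  have "AE x in lborel. AE y in lborel. Phi (x, y)" using lborel_pair.AE_pair[OF ae] .
  then have "AE q1 in (lborel :: (real \<times> 'b) measure). AE y in lborel. Phi (fst q1, y)"
    by (rule AE_fst_lift)
  then have "AE q1 in (lborel :: (real \<times> 'b) measure). AE q2 in (lborel :: (real \<times> 'b) measure). Phi (fst q1, fst q2)"
    by (rule eventually_mono) (rule AE_fst_lift)
  moreover have "{p \<in> space ((lborel :: (real \<times> 'b) measure) \<Otimes>\<^sub>M (lborel :: (real \<times> 'b) measure)). Phi (fst (fst p), fst (snd p))}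
      \<in> sets ((lborel :: (real \<times> 'b) measure) \<Otimes>\<^sub>M (lborel :: (real \<times> 'b) measure))"
  proof -
    have mA: "(\<lambda>p. (fst (fst p), fst (snd p))) \<in> (((borel \<Otimes>\<^sub>M borel) \<Otimes>\<^sub>M (borel \<Otimes>\<^sub>M borel)) :: ((real \<times> 'b) \<times> (real \<times> 'b)) measure) \<rightarrow>\<^sub>M borel \<Otimes>\<^sub>M borel"
      by measurable
    have "sets (lborel :: (real \<times> 'b) measure) = sets (borel \<Otimes>\<^sub>M borel)" by (metis borel_prod sets_lborel)
    then have mB: "measurable ((lborel :: (real \<times> 'b) measure) \<Otimes>\<^sub>M (lborel :: (real \<times> 'b) measure)) (borel \<Otimes>\<^sub>M borel :: (real \<times> real) measure)
       = measurable (((borel \<Otimes>\<^sub>M borel) \<Otimes>\<^sub>M (borel \<Otimes>\<^sub>M borel)) :: ((real \<times> 'b) \<times> (real \<times> 'b)) measure) (borel \<Otimes>\<^sub>M borel)"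
      by (intro measurable_cong_sets sets_pair_measure_cong) auto
    have "(\<lambda>p. (fst (fst p), fst (snd p))) \<in> ((lborel :: (real \<times> 'b) measure) \<Otimes>\<^sub>M (lborel :: (real \<times> 'b) measure)) \<rightarrow>\<^sub>M borel \<Otimes>\<^sub>M borel"
      by (subst mB) (rule mA)
    from measurable_compose[OF this meas] show ?thesis by (intro predE) (simp add: comp_def)
  qed
  ultimately have "AE p in (lborel :: (real \<times> 'b) measure) \<Otimes>\<^sub>M (lborel :: (real \<times> 'b) measure). Phi (fst (fst p), fst (snd p))"
    using lborel_pair.AE_pair_measure[where P="\<lambda>p. Phi (fst (fst p), fst (snd p))"] by (simp only: fst_conv snd_conv)
  then show ?thesis by (metis lborel_prod)
qed


context LY begin

definition Good :: "real \<times> real \<Rightarrow> bool" where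
  "Good z \<longleftrightarrow> (\<forall>L\<ge>1. \<forall>N. \<exists>j\<ge>N. P2 (w0 L) (w0 L) (TK (4*L) j z)) \<and>
              (\<forall>L\<ge>1. \<forall>N. \<exists>j\<ge>N. P2 (w0 L) (w1 L) (TK (4*L) j z))"

definition Phi :: "real \<times> real \<Rightarrow> bool" where
  "Phi z \<longleftrightarrow> (fst z \<in> {0..1} \<and> snd z \<in> {0..1} \<longrightarrow> fst z \<in> {0..<1} \<and> snd z \<in> {0..<1} \<and> Good z)"

lemma Phi_meas: "Measurable.pred (borel \<Otimes>\<^sub>M borel) Phi"
  unfolding Phi_def Good_def by measurable

lemma AE_Phi: "AE z in Q2. Phi z"
proof -
  have A0: "AE z in Q2. \<forall>L. L \<ge> 1 \<longrightarrow> (W z \<noteq> 0 \<longrightarrow> (\<forall>N. \<exists>j\<ge>N. P2 (w0 L) (w0 L) (TK (4*L) j z)))"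
    unfolding AE_all_countable
  proof
    fix L
    show "AE z in Q2. L \<ge> 1 \<longrightarrow> (W z \<noteq> 0 \<longrightarrow> (\<forall>N. \<exists>j\<ge>N. P2 (w0 L) (w0 L) (TK (4*L) j z)))"
      using AE_pattern[of "w0 L" "w0 L"] w_set w_len by (auto simp: w_len)
  qed
  have A1: "AE z in Q2. \<forall>L. L \<ge> 1 \<longrightarrow> (W z \<noteq> 0 \<longrightarrow> (\<forall>N. \<exists>j\<ge>N. P2 (w0 L) (w1 L) (TK (4*L) j z)))"
    unfolding AE_all_countable
  proof
    fix L
    show "AE z in Q2. L \<ge> 1 \<longrightarrow> (W z \<noteq> 0 \<longrightarrow> (\<forall>N. \<exists>j\<ge>N. P2 (w0 L) (w1 L) (TK (4*L) j z)))"
      using AE_pattern[of "w0 L" "w1 L"] w_set w_len by (auto simp: w_len)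
  qed
  have B1: "AE z in Q2. fst z \<noteq> 1"
    using AE_fst_lift[OF AE_lborel_singleton[of "1::real"], where 'b=real] by (metis lborel_prod)
  have B2: "AE z in Q2. snd z \<noteq> 1"
    using AE_snd_lift[OF AE_lborel_singleton[of "1::real"], where 'b=real] by (metis lborel_prod)
  show ?thesis
    using A0 A1 B1 B2
  proof eventually_elim
    case (elim z)
    show ?case unfolding Phi_def
    proof
      assume z: "fst z \<in> {0..1} \<and> snd z \<in> {0..1}"
      then have zz: "fst z \<in> {0..<1}" "snd z \<in> {0..<1}" using elim by auto
      then have "W z \<noteq> 0" by (simp add: W_def)
      then show "fst z \<in> {0..<1} \<and> snd z \<in> {0..<1} \<and> Good z" using zz elim by (auto simp: Good_def)
    qed
  qed
qed

end

theorem mainTheorem5: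
  fixes M :: nat and a :: real
  assumes "M \<ge> 2" and "0 < a" and "a < 1 / real M"
  shows "(AE p in lborel.
            fst p \<in> {0..1::real} \<times> {0..1::real} \<and> snd p \<in> {0..1::real} \<times> {0..1::real} \<longrightarrow>
              liminf (\<lambda>n. ereal (dist ((f2 M a ^^ n) (fst p)) ((f2 M a ^^ n) (snd p)))) = 0 \<and>
              limsup (\<lambda>n. ereal (dist ((f2 M a ^^ n) (fst p)) ((f2 M a ^^ n) (snd p)))) = ereal (sqrt 2))
       \<and> (AE p in lborel.
            fst p \<in> {0..1::real} \<times> {0..1::real} \<times> {0..1::real} \<and>
            snd p \<in> {0..1::real} \<times> {0..1::real} \<times> {0..1::real} \<longrightarrow>
              liminf (\<lambda>n. ereal (dist ((f3 M a (1 / real M - a) ^^ n) (fst p))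
                                        ((f3 M a (1 / real M - a) ^^ n) (snd p)))) = 0 \<and>
              limsup (\<lambda>n. ereal (dist ((f3 M a (1 / real M - a) ^^ n) (fst p))
                                        ((f3 M a (1 / real M - a) ^^ n) (snd p)))) = ereal (sqrt 3))"
proof -
  interpret LY M a using assms by unfold_locales
  have ae2: "AE p in (lborel :: ((real \<times> real) \<times> (real \<times> real)) measure). Phi (fst (fst p), fst (snd p))"
    by (rule lift4[OF Phi_meas AE_Phi])
  have ae3: "AE p in (lborel :: ((real \<times> real \<times> real) \<times> (real \<times> real \<times> real)) measure). Phi (fst (fst p), fst (snd p))"
    by (rule lift4[OF Phi_meas AE_Phi])
  show ?thesis
  proof
    show "AE p in lborel.
            fst p \<in> {0..1::real} \<times> {0..1::real} \<and> snd p \<in> {0..1::real} \<times> {0..1::real} \<longrightarrow>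
              liminf (\<lambda>n. ereal (dist ((f2 M a ^^ n) (fst p)) ((f2 M a ^^ n) (snd p)))) = 0 \<and>
              limsup (\<lambda>n. ereal (dist ((f2 M a ^^ n) (fst p)) ((f2 M a ^^ n) (snd p)))) = ereal (sqrt 2)"
      using ae2
    proof (rule eventually_mono, intro impI)
      fix p :: "(real \<times> real) \<times> (real \<times> real)"
      assume ph: "Phi (fst (fst p), fst (snd p))"
        and pr: "fst p \<in> {0..1::real} \<times> {0..1::real} \<and> snd p \<in> {0..1::real} \<times> {0..1::real}"
      obtain u c v e where p: "p = ((u, c), (v, e))" by (cases p) auto
      have r: "u \<in> {0..<1}" "v \<in> {0..<1}" "Good (u, v)" "c \<in> {0..1}" "e \<in> {0..1}"
        using ph pr by (auto simp: p Phi_def)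
      from LY_pair[of u v c 0 e 0] r
      show "liminf (\<lambda>n. ereal (dist ((f2 M a ^^ n) (fst p)) ((f2 M a ^^ n) (snd p)))) = 0 \<and>
              limsup (\<lambda>n. ereal (dist ((f2 M a ^^ n) (fst p)) ((f2 M a ^^ n) (snd p)))) = ereal (sqrt 2)"
        by (simp add: p Good_def)
    qed
    show "AE p in lborel.
            fst p \<in> {0..1::real} \<times> {0..1::real} \<times> {0..1::real} \<and>
            snd p \<in> {0..1::real} \<times> {0..1::real} \<times> {0..1::real} \<longrightarrow>
              liminf (\<lambda>n. ereal (dist ((f3 M a (1 / real M - a) ^^ n) (fst p))
                                        ((f3 M a (1 / real M - a) ^^ n) (snd p)))) = 0 \<and>
              limsup (\<lambda>n. ereal (dist ((f3 M a (1 / real M - a) ^^ n) (fst p))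
                                        ((f3 M a (1 / real M - a) ^^ n) (snd p)))) = ereal (sqrt 3)"
      using ae3
    proof (rule eventually_mono, intro impI)
      fix p :: "(real \<times> real \<times> real) \<times> (real \<times> real \<times> real)"
      assume ph: "Phi (fst (fst p), fst (snd p))"
        and pr: "fst p \<in> {0..1::real} \<times> {0..1::real} \<times> {0..1::real} \<and> snd p \<in> {0..1::real} \<times> {0..1::real} \<times> {0..1::real}"
      obtain u c s v e t where p: "p = ((u, c, s), (v, e, t))" by (cases p) auto
      have r: "u \<in> {0..<1}" "v \<in> {0..<1}" "Good (u, v)" "c \<in> {0..1}" "e \<in> {0..1}" "s \<in> {0..1}" "t \<in> {0..1}"
        using ph pr by (auto simp: p Phi_def)
      from LY_pair[of u v c s e t] r
      show "liminf (\<lambda>n. ereal (dist ((f3 M a (1 / real M - a) ^^ n) (fst p))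
                                        ((f3 M a (1 / real M - a) ^^ n) (snd p)))) = 0 \<and>
              limsup (\<lambda>n. ereal (dist ((f3 M a (1 / real M - a) ^^ n) (fst p))
                                        ((f3 M a (1 / real M - a) ^^ n) (snd p)))) = ereal (sqrt 3)"
        by (simp add: p Good_def Y_def bb_def)
    qed
  qed
qed


end
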